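(* Let $G$ be a subgroup of the affine group $\mathcal G$ with a unitary representation $G\ni g\mapsto U_g$ on a separable Hilbert space $\mathcal H$, and let $\dot A$ be a closed densely defined symmetric operator in $\mathcal H$ which is $G$-invariant with respect to this representation. Suppose that $A$ is a maximal dissipative extension of $\dot A$. Then for every $g\in G$ the restriction $A_g=(\dot A)^*|_{D_g}$ of the adjoint operator $(\dot A)^*$ to $D_g=U_g(\mathrm{Dom}(A))$ is a maximal dissipative extension of $\dot A$.
   Context: $\mathcal G$ denotes the group (under composition) of affine maps $g(x)=ax+b$ of $\mathbb R$ with $a>0$, $b\in\mathbb R$. For an operator $A$ and $g(x)=ax+b$, $g(A)$ denotes $aA+bI$. A densely defined closed operator $A$ is called $G$-invariant (with respect to a unitary representation $g\mapsto U_g$ of a subgroup $G\subset\mathcal G$) if for all $g\in G$ one has $U_g(\mathrm{Dom}(A))=\mathrm{Dom}(A)$ and $U_gAU_g^*f=aAf+bf$ for all $f\in\mathrm{Dom}(A)$, where $g(x)=ax+b$. An operator is dissipative if $\operatorname{Im}(Af,f)\ge0$ on its domain, and maximal dissipative if it has no proper dissipative extension. *)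

theory Defs
  imports "HOL-Analysis.Analysis"
begin

class complex_hilbert = banach +
  fixes scaleC :: "complex \<Rightarrow> 'a \<Rightarrow> 'a"
    and cinner :: "'a \<Rightarrow> 'a \<Rightarrow> complex"
  assumes scaleC_add_right: "scaleC c (x + y) = scaleC c x + scaleC c y"
    and scaleC_add_left: "scaleC (c + d) x = scaleC c x + scaleC d x"
    and scaleC_scaleC: "scaleC c (scaleC d x) = scaleC (c * d) x"
    and scaleC_one: "scaleC 1 x = x"
    and scaleR_scaleC: "scaleR r x = scaleC (complex_of_real r) x"
    and cinner_add_left: "cinner (x + y) z = cinner x z + cinner y z"
    and cinner_scaleC_left: "cinner (scaleC c x) y = c * cinner x y"
    and cinner_commute: "cinner y x = cnj (cinner x y)"
    and cinner_self: "cinner x x = complex_of_real ((norm x)\<^sup>2)"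

definition csubspace :: "'a::complex_hilbert set \<Rightarrow> bool" where
  "csubspace D \<longleftrightarrow> 0 \<in> D \<and> (\<forall>x\<in>D. \<forall>y\<in>D. x + y \<in> D) \<and> (\<forall>c. \<forall>x\<in>D. scaleC c x \<in> D)"

definition lin_op :: "'a::complex_hilbert set \<Rightarrow> ('a \<Rightarrow> 'a) \<Rightarrow> bool" where
  "lin_op D A \<longleftrightarrow> csubspace D \<and> (\<forall>x\<in>D. \<forall>y\<in>D. A (x + y) = A x + A y)
     \<and> (\<forall>c. \<forall>x\<in>D. A (scaleC c x) = scaleC c (A x))"

definition densely_defined :: "'a::complex_hilbert set \<Rightarrow> bool" where
  "densely_defined D \<longleftrightarrow> closure D = UNIV"

definition closed_op :: "'a::complex_hilbert set \<Rightarrow> ('a \<Rightarrow> 'a) \<Rightarrow> bool" where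
  "closed_op D A \<longleftrightarrow> closed ((\<lambda>x. (x, A x)) ` D)"

definition symmetric_op :: "'a::complex_hilbert set \<Rightarrow> ('a \<Rightarrow> 'a) \<Rightarrow> bool" where
  "symmetric_op D A \<longleftrightarrow> (\<forall>f\<in>D. \<forall>g\<in>D. cinner (A f) g = cinner f (A g))"

definition adj_dom :: "'a::complex_hilbert set \<Rightarrow> ('a \<Rightarrow> 'a) \<Rightarrow> 'a set" where
  "adj_dom D A = {g. \<exists>h. \<forall>f\<in>D. cinner (A f) g = cinner f h}"

definition adj_fun :: "'a::complex_hilbert set \<Rightarrow> ('a \<Rightarrow> 'a) \<Rightarrow> 'a \<Rightarrow> 'a" where
  "adj_fun D A g = (THE h. \<forall>f\<in>D. cinner (A f) g = cinner f h)"

definition op_extends :: "'a::complex_hilbert set \<Rightarrow> ('a \<Rightarrow> 'a) \<Rightarrow> 'a set \<Rightarrow> ('a \<Rightarrow> 'a) \<Rightarrow> bool" where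
  "op_extends D A D0 A0 \<longleftrightarrow> D0 \<subseteq> D \<and> (\<forall>f\<in>D0. A f = A0 f)"

definition dissipative :: "'a::complex_hilbert set \<Rightarrow> ('a \<Rightarrow> 'a) \<Rightarrow> bool" where
  "dissipative D A \<longleftrightarrow> (\<forall>f\<in>D. Im (cinner (A f) f) \<ge> 0)"

definition maximal_dissipative :: "'a::complex_hilbert set \<Rightarrow> ('a \<Rightarrow> 'a) \<Rightarrow> bool" where
  "maximal_dissipative D A \<longleftrightarrow> lin_op D A \<and> dissipative D A \<and>
     (\<forall>D' A'. lin_op D' A' \<and> dissipative D' A' \<and> op_extends D' A' D A \<longrightarrow> D' = D)"

definition separable_space :: "'a::complex_hilbert itself \<Rightarrow> bool" where
  "separable_space _ \<longleftrightarrow> (\<exists>C::'a set. countable C \<and> closure C = UNIV)"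

definition unitary_op :: "('a::complex_hilbert \<Rightarrow> 'a) \<Rightarrow> bool" where
  "unitary_op U \<longleftrightarrow> bij U \<and> (\<forall>x y. U (x + y) = U x + U y) \<and> (\<forall>c x. U (scaleC c x) = scaleC c (U x))
     \<and> (\<forall>x y. cinner (U x) (U y) = cinner x y)"

text \<open>An affine map g(x) = a x + b with a > 0 is represented by the pair (a, b).\<close>

definition aff_comp :: "real \<times> real \<Rightarrow> real \<times> real \<Rightarrow> real \<times> real" where
  "aff_comp g h = (fst g * fst h, fst g * snd h + snd g)"

definition aff_inv :: "real \<times> real \<Rightarrow> real \<times> real" where
  "aff_inv g = (1 / fst g, - snd g / fst g)"

definition affine_subgroup :: "(real \<times> real) set \<Rightarrow> bool" where
  "affine_subgroup G \<longleftrightarrow> G \<subseteq> {g. fst g > 0} \<and> (1, 0) \<in> G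
     \<and> (\<forall>g\<in>G. \<forall>h\<in>G. aff_comp g h \<in> G) \<and> (\<forall>g\<in>G. aff_inv g \<in> G)"

definition unitary_rep :: "(real \<times> real) set \<Rightarrow> (real \<times> real \<Rightarrow> 'a::complex_hilbert \<Rightarrow> 'a) \<Rightarrow> bool" where
  "unitary_rep G U \<longleftrightarrow> (\<forall>g\<in>G. unitary_op (U g)) \<and> U (1, 0) = id
     \<and> (\<forall>g\<in>G. \<forall>h\<in>G. U (aff_comp g h) = U g \<circ> U h)
     \<and> (\<forall>f. continuous_on G (\<lambda>g. U g f))"

definition G_invariant :: "(real \<times> real) set \<Rightarrow> (real \<times> real \<Rightarrow> 'a::complex_hilbert \<Rightarrow> 'a)
     \<Rightarrow> 'a set \<Rightarrow> ('a \<Rightarrow> 'a) \<Rightarrow> bool" where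
  "G_invariant G U D A \<longleftrightarrow> (\<forall>g\<in>G. U g ` D = D \<and>
     (\<forall>f\<in>D. U g (A (inv (U g) f)) = scaleC (complex_of_real (fst g)) (A f) + scaleC (complex_of_real (snd g)) f))"

end

theory Submission
  imports Defs
begin

lemma cinner_add_right: "cinner (x::'a::complex_hilbert) (y + z) = cinner x y + cinner x z"
  by (metis cinner_commute cinner_add_left complex_cnj_add)

lemma cinner_scaleC_right: "cinner (x::'a::complex_hilbert) (scaleC c y) = cnj c * cinner x y"
  by (metis cinner_commute cinner_scaleC_left complex_cnj_mult)

lemma cinner_scaleR_left: "cinner (scaleR r (x::'a::complex_hilbert)) y = of_real r * cinner x y"
  by (simp add: scaleR_scaleC cinner_scaleC_left)

lemma cinner_scaleR_right: "cinner (x::'a::complex_hilbert) (scaleR r y) = of_real r * cinner x y"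
  by (simp add: scaleR_scaleC cinner_scaleC_right)

lemma cinner_diff_left: "cinner ((x::'a::complex_hilbert) - y) z = cinner x z - cinner y z"
proof -
  have "cinner x z = cinner (x - y) z + cinner y z" by (metis cinner_add_left diff_add_cancel)
  thus ?thesis by simp
qed

lemma cinner_diff_right: "cinner (z::'a::complex_hilbert) (x - y) = cinner z x - cinner z y"
proof -
  have "cinner z x = cinner z (x - y) + cinner z y" by (metis cinner_add_right diff_add_cancel)
  thus ?thesis by simp
qed

lemma scaleC_scaleR: "scaleC c (scaleR r (x::'a::complex_hilbert)) = scaleR r (scaleC c x)"
  by (simp add: scaleR_scaleC scaleC_scaleC mult.commute)

lemma scaleC_diff_right: "scaleC c ((x::'a::complex_hilbert) - y) = scaleC c x - scaleC c y"
proof -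
  have "scaleC c x = scaleC c (x - y) + scaleC c y" by (metis scaleC_add_right diff_add_cancel)
  thus ?thesis by simp
qed

lemma Re_cinner_eq:
  "Re (cinner (x::'a::complex_hilbert) w) = ((norm (x+w))^2 - (norm x)^2 - (norm w)^2)/2"
proof -
  have "cinner (x+w) (x+w) = cinner x x + cinner x w + cinner w x + cinner w w"
    by (simp add: cinner_add_left cinner_add_right)
  moreover have "cinner w x = cnj (cinner x w)" by (rule cinner_commute)
  ultimately have "complex_of_real ((norm (x+w))^2) = of_real ((norm x)^2) + cinner x w + cnj (cinner x w) + of_real ((norm w)^2)"
    by (simp add: cinner_self)
  then have "Re (complex_of_real ((norm (x+w))^2)) = Re (of_real ((norm x)^2) + cinner x w + cnj (cinner x w) + of_real ((norm w)^2))"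
    by (rule arg_cong)
  then show ?thesis by simp
qed

lemma dense_zero:
  assumes dd: "densely_defined (D0::'a::complex_hilbert set)" and H: "\<forall>k\<in>D0. cinner k w = 0"
  shows "w = 0"
proof -
  let ?S = "{k. ((norm (k+w))^2 - (norm k)^2 - (norm w)^2)/2 = 0}"
  have cl: "closed ?S" by (intro closed_Collect_eq continuous_intros) auto
  have "D0 \<subseteq> ?S"
  proof
    fix k assume k: "k \<in> D0"
    have "Re (cinner k w) = 0" using H k by simp
    thus "k \<in> ?S" using Re_cinner_eq[of k w] by simp
  qed
  then have "closure D0 \<subseteq> ?S" using cl closure_minimal by blast
  moreover have "w \<in> closure D0" using dd unfolding densely_defined_def by simp
  ultimately have "w \<in> ?S" by blast
  then have "Re (cinner w w) = 0" using Re_cinner_eq[of w w] by simp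
  then have "(norm w)^2 = 0" by (simp add: cinner_self)
  then show ?thesis by simp
qed

lemma adj_unique:
  assumes dd: "densely_defined (D0::'a::complex_hilbert set)"
    and H: "\<forall>k\<in>D0. cinner (A0 k) f = cinner k h"
  shows "f \<in> adj_dom D0 A0 \<and> adj_fun D0 A0 f = h"
proof
  show "f \<in> adj_dom D0 A0" using H unfolding adj_dom_def by auto
  show "adj_fun D0 A0 f = h" unfolding adj_fun_def
  proof (rule the_equality)
    show "\<forall>k\<in>D0. cinner (A0 k) f = cinner k h" by (rule H)
    fix h' assume H': "\<forall>k\<in>D0. cinner (A0 k) f = cinner k h'"
    have "\<forall>k\<in>D0. cinner k (h' - h) = 0" using H H' by (simp add: cinner_diff_right)
    then have "h' - h = 0" by (rule dense_zero[OF dd])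
    then show "h' = h" by simp
  qed
qed

lemma lin_aux: "(\<forall>t::real. 0 \<le> p + t * q) \<Longrightarrow> q = 0"
proof (rule ccontr)
  assume H: "\<forall>t::real. 0 \<le> p + t * q" and q: "q \<noteq> 0"
  have "0 \<le> p + (-(abs p + 1)/q) * q" using H by blast
  also have "\<dots> = p - (abs p + 1)" using q by simp
  finally show False by simp
qed

lemma diss_sym:
  fixes D D0 :: "'a::complex_hilbert set"
  assumes lin: "lin_op D A" and dis: "dissipative D A" and sub: "D0 \<subseteq> D"
    and eq: "\<forall>h\<in>D0. A h = A0 h" and sym: "symmetric_op D0 A0"
    and f: "f \<in> D" and h: "h \<in> D0"
  shows "cinner (A0 h) f = cinner h (A f)"
proof -
  define \<alpha> where "\<alpha> = cinner (A f) h"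
  define \<beta> where "\<beta> = cinner (A0 h) f"
  define r where "r = cinner (A0 h) h"
  have hD: "h \<in> D" using sub h by auto
  have r: "Im r = 0"
  proof -
    have "r = cinner h (A0 h)" using sym h unfolding symmetric_op_def r_def by auto
    also have "\<dots> = cnj r" unfolding r_def by (rule cinner_commute)
    finally have "Im r = Im (cnj r)" by simp
    then show ?thesis by simp
  qed
  have key: "0 \<le> Im (cinner (A f) f) + Im (cnj c * \<alpha> + c * \<beta>)" for c
  proof -
    have m: "f + scaleC c h \<in> D" using lin f hD unfolding lin_op_def csubspace_def by auto
    have "A (f + scaleC c h) = A f + scaleC c (A0 h)"
      using lin f hD eq h unfolding lin_op_def csubspace_def by auto
    then have "cinner (A (f + scaleC c h)) (f + scaleC c h) = cinner (A f) f + (cnj c * \<alpha> + c * \<beta>) + c * cnj c * r"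
      by (simp add: cinner_add_left cinner_add_right cinner_scaleC_left cinner_scaleC_right \<alpha>_def \<beta>_def r_def algebra_simps)
    moreover have "Im (c * cnj c * r) = 0" using r by (simp add: complex_mult_cnj)
    moreover have "0 \<le> Im (cinner (A (f + scaleC c h)) (f + scaleC c h))"
      using dis m unfolding dissipative_def by auto
    ultimately show ?thesis using r by simp
  qed
  have "\<forall>t::real. 0 \<le> Im (cinner (A f) f) + t * Im (\<alpha> + \<beta>)"
  proof
    fix t :: real
    show "0 \<le> Im (cinner (A f) f) + t * Im (\<alpha> + \<beta>)"
      using key[of "of_real t"] by (simp add: algebra_simps)
  qed
  then have 1: "Im (\<alpha> + \<beta>) = 0" by (rule lin_aux)
  have "\<forall>t::real. 0 \<le> Im (cinner (A f) f) + t * Re (\<beta> - \<alpha>)"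
  proof
    fix t :: real
    show "0 \<le> Im (cinner (A f) f) + t * Re (\<beta> - \<alpha>)"
      using key[of "\<i> * of_real t"] by (simp add: algebra_simps)
  qed
  then have 2: "Re (\<beta> - \<alpha>) = 0" by (rule lin_aux)
  have "\<beta> = cnj \<alpha>" using 1 2 by (simp add: complex_eq_iff)
  also have "cnj \<alpha> = cinner h (A f)" unfolding \<alpha>_def by (rule cinner_commute[symmetric])
  finally show ?thesis unfolding \<beta>_def .
qed


lemma u_add: "unitary_op V \<Longrightarrow> V (x + y) = V x + V y" by (simp add: unitary_op_def)
lemma u_scaleC: "unitary_op V \<Longrightarrow> V (scaleC c x) = scaleC c (V x)" by (simp add: unitary_op_def)
lemma u_cinner: "unitary_op V \<Longrightarrow> cinner (V x) (V y) = cinner x y" by (simp add: unitary_op_def)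
lemma u_bij: "unitary_op V \<Longrightarrow> bij V" by (simp add: unitary_op_def)
lemma u_zero: assumes "unitary_op (V::'a::complex_hilbert \<Rightarrow> 'a)" shows "V 0 = 0"
proof -
  have "V (0+0) = V 0 + V 0" by (rule u_add[OF assms])
  thus ?thesis by simp
qed
lemma u_scaleR: "unitary_op (V::'a::complex_hilbert \<Rightarrow> 'a) \<Longrightarrow> V (scaleR r x) = scaleR r (V x)"
  by (simp add: scaleR_scaleC u_scaleC)
lemma u_diff: assumes "unitary_op (V::'a::complex_hilbert \<Rightarrow> 'a)" shows "V (x - y) = V x - V y"
proof -
  have "V x = V ((x - y) + y)" by simp
  also have "\<dots> = V (x - y) + V y" by (rule u_add[OF assms])
  finally show ?thesis by simp
qed
lemma u_inv1: "unitary_op V \<Longrightarrow> inv V (V x) = x"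
  by (meson bij_is_inj inv_f_f u_bij)
lemma u_inv2: "unitary_op V \<Longrightarrow> V (inv V x) = x"
  by (meson bij_is_surj surj_f_inv_f u_bij)
lemma ui_add: assumes "unitary_op V" shows "inv V (x + y) = inv V x + inv V y"
proof -
  have "x + y = V (inv V x + inv V y)" by (simp add: u_add[OF assms] u_inv2[OF assms])
  then show ?thesis by (metis u_inv1[OF assms])
qed
lemma ui_scaleC: assumes "unitary_op V" shows "inv V (scaleC c x) = scaleC c (inv V x)"
proof -
  have "scaleC c x = V (scaleC c (inv V x))" by (simp add: u_scaleC[OF assms] u_inv2[OF assms])
  then show ?thesis by (metis u_inv1[OF assms])
qed
lemma ui_scaleR: assumes "unitary_op (V::'a::complex_hilbert \<Rightarrow> 'a)" shows "inv V (scaleR r x) = scaleR r (inv V x)"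
  by (simp add: scaleR_scaleC ui_scaleC[OF assms])
lemma ui_diff: assumes "unitary_op (V::'a::complex_hilbert \<Rightarrow> 'a)" shows "inv V (x - y) = inv V x - inv V y"
proof -
  have "x - y = V (inv V x - inv V y)" by (simp add: u_diff[OF assms] u_inv2[OF assms])
  then show ?thesis by (metis u_inv1[OF assms])
qed
lemma ui_zero: assumes "unitary_op (V::'a::complex_hilbert \<Rightarrow> 'a)" shows "inv V 0 = 0"
  by (metis assms u_inv1 u_zero)
lemma ui_cinner: assumes "unitary_op V" shows "cinner (inv V y) x = cinner y (V x)"
  by (metis assms u_cinner u_inv2)

theorem lemma3p1:
  fixes G :: "(real \<times> real) set"
    and U :: "real \<times> real \<Rightarrow> 'h::complex_hilbert \<Rightarrow> 'h"
    and D0 :: "'h set" and A0 :: "'h \<Rightarrow> 'h"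
    and D :: "'h set" and A :: "'h \<Rightarrow> 'h"
  assumes "separable_space TYPE('h)"
    and "affine_subgroup G"
    and "unitary_rep G U"
    and "lin_op D0 A0" and "densely_defined D0" and "closed_op D0 A0" and "symmetric_op D0 A0"
    and "G_invariant G U D0 A0"
    and "maximal_dissipative D A" and "op_extends D A D0 A0"
  shows "\<forall>g\<in>G. U g ` D \<subseteq> adj_dom D0 A0
           \<and> maximal_dissipative (U g ` D) (adj_fun D0 A0)
           \<and> op_extends (U g ` D) (adj_fun D0 A0) D0 A0"
proof
  fix g assume gG: "g \<in> G"
  define a where "a = fst g"
  define b where "b = snd g"
  define V where "V = U g"
  have apos: "a > 0" using assms(2) gG unfolding affine_subgroup_def a_def by auto
  have uV: "unitary_op V" using assms(3) gG unfolding unitary_rep_def V_def by auto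
  have inv0: "V ` D0 = D0" using assms(8) gG unfolding G_invariant_def V_def by auto
  have invA: "\<forall>f\<in>D0. V (A0 (inv V f)) = scaleR a (A0 f) + scaleR b f"
    using assms(8) gG unfolding G_invariant_def V_def a_def b_def by (simp add: scaleR_scaleC)
  have Vk: "V k \<in> D0" if "k \<in> D0" for k using inv0 that by auto
  have A0V: "scaleR a (A0 (V k)) = V (A0 k) - scaleR b (V k)" if k: "k \<in> D0" for k
  proof -
    have "V (A0 (inv V (V k))) = scaleR a (A0 (V k)) + scaleR b (V k)" using invA Vk[OF k] by blast
    then show ?thesis by (simp add: u_inv1[OF uV])
  qed
  have sub0: "D0 \<subseteq> D" and eqA: "\<forall>h\<in>D0. A h = A0 h" using assms(10) unfolding op_extends_def by auto
  have linA: "lin_op D A" and disA: "dissipative D A" using assms(9) unfolding maximal_dissipative_def by auto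
  have sym0: "cinner (A0 k) f = cinner k (A f)" if "f \<in> D" "k \<in> D0" for f k
    by (rule diss_sym[OF linA disA sub0 eqA assms(7) that])
  define T where "T f = scaleR (1/a) (V (A f) - scaleR b (V f))" for f
  have adjV: "V f \<in> adj_dom D0 A0 \<and> adj_fun D0 A0 (V f) = T f" if f: "f \<in> D" for f
  proof (rule adj_unique[OF assms(5)], intro ballI)
    fix h assume h: "h \<in> D0"
    then obtain k where k: "k \<in> D0" and hk: "h = V k" using inv0 by auto
    have "cinner (A0 (V k)) (V f) = of_real (1/a) * cinner (scaleR a (A0 (V k))) (V f)"
      using apos by (simp add: cinner_scaleR_left)
    also have "\<dots> = of_real (1/a) * (cinner (A0 k) f - of_real b * cinner k f)"
      by (simp add: A0V[OF k] cinner_diff_left cinner_scaleR_left u_cinner[OF uV])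
    also have "\<dots> = of_real (1/a) * (cinner k (A f) - of_real b * cinner k f)"
      using sym0[OF f k] by simp
    also have "\<dots> = cinner (V k) (T f)"
      by (simp add: T_def cinner_diff_right cinner_scaleR_right u_cinner[OF uV])
    finally show "cinner (A0 h) (V f) = cinner h (T f)" using hk by simp
  qed
  have Tadd: "T (f + f') = T f + T f'" if "f \<in> D" "f' \<in> D" for f f'
  proof -
    have "A (f + f') = A f + A f'" using linA that unfolding lin_op_def by auto
    then show ?thesis by (simp add: T_def u_add[OF uV] algebra_simps)
  qed
  have TscC: "T (scaleC c f) = scaleC c (T f)" if "f \<in> D" for f c
  proof -
    have "A (scaleC c f) = scaleC c (A f)" using linA that unfolding lin_op_def by auto
    then show ?thesis by (simp add: T_def u_scaleC[OF uV] scaleC_scaleR scaleC_diff_right)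
  qed
  have csD: "csubspace D" using linA unfolding lin_op_def by auto
  have linG: "lin_op (V ` D) (adj_fun D0 A0)"
    unfolding lin_op_def
  proof (intro conjI ballI allI)
    show "csubspace (V ` D)" unfolding csubspace_def
    proof (intro conjI ballI allI)
      show "0 \<in> V ` D" using csD u_zero[OF uV] unfolding csubspace_def by (metis image_eqI)
    next
      fix x y assume "x \<in> V ` D" "y \<in> V ` D"
      then obtain f f' where "f \<in> D" "f' \<in> D" "x = V f" "y = V f'" by auto
      then show "x + y \<in> V ` D" using csD u_add[OF uV] unfolding csubspace_def by (metis image_eqI)
    next
      fix c x assume "x \<in> V ` D"
      then obtain f where "f \<in> D" "x = V f" by auto
      then show "scaleC c x \<in> V ` D" using csD u_scaleC[OF uV] unfolding csubspace_def by (metis image_eqI)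
    qed
  next
    fix x y assume "x \<in> V ` D" "y \<in> V ` D"
    then obtain f f' where f: "f \<in> D" "f' \<in> D" and xy: "x = V f" "y = V f'" by auto
    have "f + f' \<in> D" using csD f unfolding csubspace_def by auto
    then show "adj_fun D0 A0 (x + y) = adj_fun D0 A0 x + adj_fun D0 A0 y"
      using xy adjV f Tadd[OF f] u_add[OF uV] by metis
  next
    fix c x assume "x \<in> V ` D"
    then obtain f where f: "f \<in> D" and x: "x = V f" by auto
    have "scaleC c f \<in> D" using csD f unfolding csubspace_def by auto
    then show "adj_fun D0 A0 (scaleC c x) = scaleC c (adj_fun D0 A0 x)"
      using x adjV f TscC[OF f] u_scaleC[OF uV] by metis
  qed
  have disT: "0 \<le> Im (cinner (T f) (V f))" if f: "f \<in> D" for f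
  proof -
    have "Im (cinner (T f) (V f)) = (1/a) * Im (cinner (A f) f)"
      by (simp add: T_def cinner_diff_left cinner_scaleR_left u_cinner[OF uV] cinner_self)
    moreover have "0 \<le> Im (cinner (A f) f)" using disA f unfolding dissipative_def by auto
    ultimately show ?thesis using apos by simp
  qed
  have disG: "dissipative (V ` D) (adj_fun D0 A0)"
    unfolding dissipative_def using disT adjV by auto
  have maxG: "D' = V ` D" if lin': "lin_op D' A'" and dis': "dissipative D' A'"
    and ext': "op_extends D' A' (V ` D) (adj_fun D0 A0)" for D' A'
  proof -
    define D'' where "D'' = inv V ` D'"
    define A'' where "A'' x = scaleR a (inv V (A' (V x))) + scaleR b x" for x
    have mem: "x \<in> D'' \<longleftrightarrow> V x \<in> D'" for x
      unfolding D''_def using u_inv1[OF uV] u_inv2[OF uV] by (metis image_iff)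
    have cs': "csubspace D'" using lin' unfolding lin_op_def by auto
    have lin'': "lin_op D'' A''" unfolding lin_op_def csubspace_def
    proof (intro conjI ballI allI)
      show "0 \<in> D''" using mem u_zero[OF uV] cs' unfolding csubspace_def by auto
    next
      fix x y assume "x \<in> D''" "y \<in> D''"
      then show "x + y \<in> D''" using mem u_add[OF uV] cs' unfolding csubspace_def by auto
    next
      fix c x assume "x \<in> D''"
      then show "scaleC c x \<in> D''" using mem u_scaleC[OF uV] cs' unfolding csubspace_def by auto
    next
      fix x y assume "x \<in> D''" "y \<in> D''"
      then have "A' (V x + V y) = A' (V x) + A' (V y)" using mem lin' unfolding lin_op_def by auto
      then show "A'' (x + y) = A'' x + A'' y"
        by (simp add: A''_def u_add[OF uV] ui_add[OF uV] algebra_simps)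
    next
      fix c x assume "x \<in> D''"
      then have "A' (scaleC c (V x)) = scaleC c (A' (V x))" using mem lin' unfolding lin_op_def by auto
      then show "A'' (scaleC c x) = scaleC c (A'' x)"
        by (simp add: A''_def u_scaleC[OF uV] ui_scaleC[OF uV] scaleC_add_right scaleC_scaleR)
    qed
    have dis'': "dissipative D'' A''" unfolding dissipative_def
    proof
      fix x assume "x \<in> D''"
      then have "0 \<le> Im (cinner (A' (V x)) (V x))" using mem dis' unfolding dissipative_def by auto
      moreover have "Im (cinner (A'' x) x) = a * Im (cinner (A' (V x)) (V x))"
        by (simp add: A''_def cinner_add_left cinner_scaleR_left ui_cinner[OF uV] cinner_self)
      ultimately show "0 \<le> Im (cinner (A'' x) x)" using apos by simp
    qed
    have ext'': "op_extends D'' A'' D A" unfolding op_extends_def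
    proof (intro conjI ballI)
      show "D \<subseteq> D''" using mem ext' unfolding op_extends_def by auto
    next
      fix f assume f: "f \<in> D"
      have "A' (V f) = adj_fun D0 A0 (V f)" using ext' f unfolding op_extends_def by auto
      also have "\<dots> = T f" using adjV f by auto
      finally have "A' (V f) = T f" .
      then show "A'' f = A f" using apos
        by (simp add: A''_def T_def ui_scaleR[OF uV] ui_diff[OF uV] u_inv1[OF uV])
    qed
    have "D'' = D" using assms(9) lin'' dis'' ext'' unfolding maximal_dissipative_def by blast
    moreover have "V ` D'' = D'" unfolding D''_def by (simp add: image_image u_inv2[OF uV])
    ultimately show "D' = V ` D" by simp
  qed
  show "U g ` D \<subseteq> adj_dom D0 A0
           \<and> maximal_dissipative (U g ` D) (adj_fun D0 A0)
           \<and> op_extends (U g ` D) (adj_fun D0 A0) D0 A0"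
    unfolding V_def[symmetric]
  proof (intro conjI)
    show "V ` D \<subseteq> adj_dom D0 A0" using adjV by auto
    show "maximal_dissipative (V ` D) (adj_fun D0 A0)"
      unfolding maximal_dissipative_def using linG disG maxG by blast
    show "op_extends (V ` D) (adj_fun D0 A0) D0 A0" unfolding op_extends_def
    proof (intro conjI ballI)
      show "D0 \<subseteq> V ` D" using inv0 sub0 by auto
      fix h assume h: "h \<in> D0"
      have "\<forall>k\<in>D0. cinner (A0 k) h = cinner k (A0 h)" using assms(7) h unfolding symmetric_op_def by auto
      then show "adj_fun D0 A0 h = A0 h" using adj_unique[OF assms(5)] by blast
    qed
  qed
qed

end
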